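(* There exists a setting (with pairwise distinct budgets) in which no envy-free assignment is realizable under the budget-oblivious second-price auction (BOSP).
   Context: Setting: there are $k\ge 1$ slots with public click-through rates $\theta_1>\theta_2>\dots>\theta_k>0$, and $n\ge k$ players. Player $i$ has a private value per click $v_i\ge 0$ and a budget $B_i>0$; the budgets $B_1,\dots,B_n$ are pairwise distinct. A setting consists of $k,n,(\theta_j),(v_i),(B_i)$ together with a fixed strict priority order on the players used to break all ties. Each player $i$ submits a value-bid $b_i\ge 0$ and a budget-bid $g_i\ge 0$; a mechanism outputs an injective partial slot assignment (assigned player $i$ gets slot $s(i)\in\{1,\dots,k\}$) and a price per click $p(i)\ge0$ for each assigned player; unassigned players pay nothing. The utility of player $i$ is $u_i=0$ if $i$ is unassigned, $u_i=\theta_{s(i)}(v_i-p(i))$ if $i$ is assigned and $\theta_{s(i)}p(i)\le B_i$, and $u_i=-\infty$ if $i$ is assigned and $\theta_{s(i)}p(i)>B_i$. BOSP: order the players by decreasing value-bid (ties broken by the priority order); for $j\le k$ the $j$-th player in this order gets slot $j$ and pays per click the value-bid of the $(j+1)$-th player in the order (0 if there is none); the remaining players are unassigned. Budget-bids are ignored. Envy-free assignment: an assignment of each of the $k$ slots to a distinct player, with a price per click $p(i)\ge 0$ for each assigned player $i$, such that for every player $i$ (assigned or not) and every assigned player $i'$ (including $i'=i$): $u_i\ge \max\{\theta_{s(i')}(v_i-p(i')),0\}$ if $\theta_{s(i')}p(i')\le B_i$, and $u_i\ge 0$ otherwise, where $u_i$ is player $i$'s utility in the assignment (computed with the true $v_i,B_i$).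 It is realizable under a mechanism if some bid profile $(b_i,g_i)_i$ makes the mechanism output exactly this slot assignment and these prices. *)

theory Defs
  imports Complex_Main "HOL-Library.Extended_Real"
begin

(* Players are 0..n-1, slots are 1..k. theta j is the CTR of slot j.
   pr is the priority order: pr i < pr i' means player i has priority over i'. *)

definition valid_setting ::
  "nat \<Rightarrow> nat \<Rightarrow> (nat \<Rightarrow> real) \<Rightarrow> (nat \<Rightarrow> real) \<Rightarrow> (nat \<Rightarrow> real) \<Rightarrow> (nat \<Rightarrow> nat) \<Rightarrow> bool" where
  "valid_setting k n theta v B pr \<longleftrightarrow>
     1 \<le> k \<and> k \<le> n \<and>
     (\<forall>j. 1 \<le> j \<and> j < k \<longrightarrow> theta (Suc j) < theta j) \<and> 0 < theta k \<and>
     (\<forall>i<n. 0 \<le> v i \<and> 0 < B i) \<and>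
     inj_on B {..<n} \<and> inj_on pr {..<n}"

definition utility ::
  "(nat \<Rightarrow> real) \<Rightarrow> (nat \<Rightarrow> real) \<Rightarrow> (nat \<Rightarrow> real) \<Rightarrow> (nat \<Rightarrow> nat option) \<Rightarrow> (nat \<Rightarrow> real) \<Rightarrow> nat \<Rightarrow> ereal" where
  "utility theta v B s p i =
     (case s i of None \<Rightarrow> 0
      | Some j \<Rightarrow> (if theta j * p i \<le> B i then ereal (theta j * (v i - p i)) else -\<infinity>))"

definition is_full_assignment ::
  "nat \<Rightarrow> nat \<Rightarrow> (nat \<Rightarrow> nat option) \<Rightarrow> (nat \<Rightarrow> real) \<Rightarrow> bool" where
  "is_full_assignment k n s p \<longleftrightarrow>
     (\<forall>i<n. \<forall>j. s i = Some j \<longrightarrow> 1 \<le> j \<and> j \<le> k \<and> 0 \<le> p i) \<and>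
     (\<forall>i<n. \<forall>i'<n. s i \<noteq> None \<and> s i = s i' \<longrightarrow> i = i') \<and>
     (\<forall>j. 1 \<le> j \<and> j \<le> k \<longrightarrow> (\<exists>i<n. s i = Some j))"

definition envy_free ::
  "nat \<Rightarrow> nat \<Rightarrow> (nat \<Rightarrow> real) \<Rightarrow> (nat \<Rightarrow> real) \<Rightarrow> (nat \<Rightarrow> real) \<Rightarrow> (nat \<Rightarrow> nat option) \<Rightarrow> (nat \<Rightarrow> real) \<Rightarrow> bool" where
  "envy_free k n theta v B s p \<longleftrightarrow>
     is_full_assignment k n s p \<and>
     (\<forall>i<n. \<forall>i'<n. \<forall>j. s i' = Some j \<longrightarrow>
        (if theta j * p i' \<le> B i
         then utility theta v B s p i \<ge> ereal (max (theta j * (v i - p i')) 0)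
         else utility theta v B s p i \<ge> 0))"

(* BOSP: 0-based position of player i in the order by decreasing value-bid, ties by priority *)
definition bosp_rank :: "nat \<Rightarrow> (nat \<Rightarrow> nat) \<Rightarrow> (nat \<Rightarrow> real) \<Rightarrow> nat \<Rightarrow> nat" where
  "bosp_rank n pr b i = card {i'. i' < n \<and> (b i' > b i \<or> (b i' = b i \<and> pr i' < pr i))}"

definition bosp_slot :: "nat \<Rightarrow> nat \<Rightarrow> (nat \<Rightarrow> nat) \<Rightarrow> (nat \<Rightarrow> real) \<Rightarrow> nat \<Rightarrow> nat option" where
  "bosp_slot k n pr b i = (if bosp_rank n pr b i < k then Some (Suc (bosp_rank n pr b i)) else None)"

definition bosp_price :: "nat \<Rightarrow> (nat \<Rightarrow> nat) \<Rightarrow> (nat \<Rightarrow> real) \<Rightarrow> nat \<Rightarrow> real" where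
  "bosp_price n pr b i =
     (if \<exists>i'<n. bosp_rank n pr b i' = Suc (bosp_rank n pr b i)
      then b (THE i'. i' < n \<and> bosp_rank n pr b i' = Suc (bosp_rank n pr b i))
      else 0)"

(* realizable: some bid profile (value-bids b, budget-bids g) makes BOSP output exactly s, p *)
definition realizable_bosp ::
  "nat \<Rightarrow> nat \<Rightarrow> (nat \<Rightarrow> nat) \<Rightarrow> (nat \<Rightarrow> nat option) \<Rightarrow> (nat \<Rightarrow> real) \<Rightarrow> bool" where
  "realizable_bosp k n pr s p \<longleftrightarrow>
     (\<exists>b g :: nat \<Rightarrow> real. (\<forall>i<n. 0 \<le> b i \<and> 0 \<le> g i) \<and>
        (\<forall>i<n. s i = bosp_slot k n pr b i) \<and>
        (\<forall>i<n. s i \<noteq> None \<longrightarrow> p i = bosp_price n pr b i))"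

end

theory Submission
  imports Defs
begin

lemma main:
  fixes s :: "nat \<Rightarrow> nat option" and p :: "nat \<Rightarrow> real"
  defines "theta \<equiv> (\<lambda>j::nat. if j = 1 then 2 else if j = 2 then 1 else (0::real))"
  defines "B \<equiv> (\<lambda>i::nat. real i + 3)"
  assumes ef: "envy_free 2 3 theta (\<lambda>_. 100) B s p"
  assumes re: "realizable_bosp 2 3 id s p"
  shows False
proof -
  have fa: "is_full_assignment 2 3 s p" using ef unfolding envy_free_def by blast
  have env: "\<And>i i' j. i<3 \<Longrightarrow> i'<3 \<Longrightarrow> s i' = Some j \<Longrightarrow>
        (if theta j * p i' \<le> B i
         then utility theta (\<lambda>_. 100) B s p i \<ge> ereal (max (theta j * (100 - p i')) 0)
         else utility theta (\<lambda>_. 100) B s p i \<ge> 0)"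
    using ef unfolding envy_free_def by blast
  have cov: "\<And>j. 1 \<le> j \<Longrightarrow> j \<le> 2 \<Longrightarrow> \<exists>i<3. s i = Some j"
    using fa unfolding is_full_assignment_def by blast
  obtain a1 where a1: "a1 < 3" "s a1 = Some 1" using cov[of 1] by auto
  obtain a2 where a2: "a2 < 3" "s a2 = Some 2" using cov[of 2] by auto
  have inj: "\<And>i i'. i<3 \<Longrightarrow> i'<3 \<Longrightarrow> s i \<noteq> None \<Longrightarrow> s i = s i' \<Longrightarrow> i = i'"
    using fa unfolding is_full_assignment_def by blast
  have rng: "\<And>i j. i<3 \<Longrightarrow> s i = Some j \<Longrightarrow> 1 \<le> j \<and> j \<le> 2"
    using fa unfolding is_full_assignment_def by blast
  have a12: "a1 \<noteq> a2" using a1 a2 by auto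
  obtain c where c: "c < 3" "c \<noteq> a1" "c \<noteq> a2"
  proof -
    have "{..<3::nat} - {a1,a2} \<noteq> {}"
    proof
      assume "{..<3::nat} - {a1,a2} = {}"
      then have "{..<3::nat} \<subseteq> {a1,a2}" by auto
      then have "card {..<3::nat} \<le> card {a1,a2}" by (intro card_mono) auto
      also have "\<dots> \<le> 2" by (simp add: card_insert_le_m1)
      finally show False by simp
    qed
    then show ?thesis using that by auto
  qed
  have sc: "s c = None"
  proof (rule ccontr)
    assume "s c \<noteq> None"
    then obtain j where j: "s c = Some j" by auto
    with rng[OF c(1)] have "j = 1 \<or> j = 2" by fastforce
    then show False using inj[of c a1] inj[of c a2] a1 a2 c j by auto
  qed
  have ua2: "utility theta (\<lambda>_. 100) B s p a2 =
     (if p a2 \<le> B a2 then ereal (100 - p a2) else -\<infinity>)"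
    using a2 unfolding utility_def theta_def by simp
  have ua1: "utility theta (\<lambda>_. 100) B s p a1 =
     (if 2 * p a1 \<le> B a1 then ereal (2 * (100 - p a1)) else -\<infinity>)"
    using a1 unfolding utility_def theta_def by simp
  have uc: "utility theta (\<lambda>_. 100) B s p c = 0"
    using sc unfolding utility_def by simp
  have pa2: "p a2 \<le> B a2"
  proof (rule ccontr)
    assume h: "\<not> p a2 \<le> B a2"
    have "utility theta (\<lambda>_. 100) B s p a2 \<ge> 0"
      using env[OF a2(1) a2(1) a2(2)] h unfolding theta_def by (simp split: if_splits)
    then show False using h ua2 by simp
  qed
  have pa1: "2 * p a1 \<le> B a1"
  proof (rule ccontr)
    assume h: "\<not> 2 * p a1 \<le> B a1"
    have "utility theta (\<lambda>_. 100) B s p a1 \<ge> 0"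
      using env[OF a1(1) a1(1) a1(2)] h unfolding theta_def by (simp split: if_splits)
    then show False using h ua1 by simp
  qed
  have Ble: "\<And>i. i < 3 \<Longrightarrow> B i \<le> 5 \<and> 3 \<le> B i" unfolding B_def by auto
  have pc: "p a2 > B c"
  proof (rule ccontr)
    assume h: "\<not> p a2 > B c"
    have "utility theta (\<lambda>_. 100) B s p c \<ge> ereal (max (100 - p a2) 0)"
      using env[OF c(1) a2(1) a2(2)] h unfolding theta_def by (simp split: if_splits)
    then have "max (100 - p a2) 0 \<le> 0" using uc by (simp add: zero_ereal_def)
    then show False using pa2 Ble[OF a2(1)] by linarith
  qed
  have ineq: "p a1 < p a2" using pc pa1 Ble[OF c(1)] Ble[OF a1(1)] by linarith
  obtain b g where bg: "\<forall>i<3. s i = bosp_slot 2 3 id b i"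
      "\<forall>i<3. s i \<noteq> None \<longrightarrow> p i = bosp_price 3 id b i"
    using re unfolding realizable_bosp_def by blast
  let ?r = "bosp_rank 3 id b"
  have r1: "?r a1 = 0" using bg(1) a1 unfolding bosp_slot_def by (auto split: if_splits)
  have r2: "?r a2 = 1" using bg(1) a2 unfolding bosp_slot_def by (auto split: if_splits)
  have rc: "\<not> ?r c < 2" using bg(1) c sc unfolding bosp_slot_def by (auto split: if_splits)
  define S where "S = {i'. i' < 3 \<and> (b i' > b c \<or> (b i' = b c \<and> id i' < id c))}"
  have Ssub: "S \<subseteq> {a1,a2}"
  proof
    fix x assume "x \<in> S"
    then have "x < 3" "x \<noteq> c" unfolding S_def by auto
    then show "x \<in> {a1,a2}" using a1(1) a2(1) c a12 by auto
  qed
  have cardS: "card S = ?r c" unfolding S_def bosp_rank_def by simp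
  have "card S \<le> card {a1,a2}" using Ssub by (intro card_mono) auto
  also have "\<dots> = 2" using a12 by simp
  finally have rc2: "?r c = 2" using rc cardS by simp
  have "S = {a1,a2}"
    using Ssub card_subset_eq[of "{a1,a2}" S] cardS rc2 a12 by simp
  then have "a2 \<in> S" by simp
  then have bge: "b a2 \<ge> b c" unfolding S_def by auto
  have th1: "(THE i'. i' < 3 \<and> ?r i' = Suc (?r a1)) = a2"
  proof (rule the_equality)
    show "a2 < 3 \<and> ?r a2 = Suc (?r a1)" using a2 r1 r2 by simp
  next
    fix i' assume h: "i' < 3 \<and> ?r i' = Suc (?r a1)"
    then have "s i' = Some 2" using bg(1) r1 unfolding bosp_slot_def by simp
    then show "i' = a2" using inj[of i' a2] h a2 by simp
  qed
  have pa1b: "p a1 = b a2"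
    using bg(2) a1 a2 r1 r2 th1 unfolding bosp_price_def by auto
  have th2: "(THE i'. i' < 3 \<and> ?r i' = Suc (?r a2)) = c"
  proof (rule the_equality)
    show "c < 3 \<and> ?r c = Suc (?r a2)" using c rc2 r2 by simp
  next
    fix i' assume h: "i' < 3 \<and> ?r i' = Suc (?r a2)"
    then have "i' \<noteq> a1" "i' \<noteq> a2" using r1 r2 by auto
    then show "i' = c" using h a1(1) a2(1) c a12 by auto
  qed
  have pa2b: "p a2 = b c"
    using bg(2) a2 c r2 rc2 th2 unfolding bosp_price_def by auto
  show False using ineq pa1b pa2b bge by simp
qed

theorem corollary1:
  shows "\<exists>k n theta v B pr. valid_setting k n theta v B pr \<and>
           \<not> (\<exists>s p. envy_free k n theta v B s p \<and> realizable_bosp k n pr s p)"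
proof (intro exI conjI)
  show "valid_setting 2 3 (\<lambda>j::nat. if j = 1 then 2 else if j = 2 then 1 else (0::real))
          (\<lambda>_. 100) (\<lambda>i::nat. real i + 3) id"
    unfolding valid_setting_def
  proof (intro conjI allI impI)
    fix j :: nat assume "1 \<le> j \<and> j < 2"
    then have "j = 1" by simp
    then show "(if Suc j = 1 then 2 else if Suc j = 2 then 1 else (0::real))
        < (if j = 1 then 2 else if j = 2 then 1 else 0)" by simp
  qed (auto simp: inj_on_def)
  show "\<not> (\<exists>s p. envy_free 2 3 (\<lambda>j::nat. if j = 1 then 2 else if j = 2 then 1 else (0::real))
          (\<lambda>_. 100) (\<lambda>i::nat. real i + 3) s p \<and> realizable_bosp 2 3 id s p)"
    using main by blast
qed

end
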